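(* Let $1\le d<n$, $r=d(n-d)$, $\mathfrak C$ a maximal chain in $I(d,n)$ and $1\le t\le r-1$. (i) If $F_t(\mathfrak C)\neq0$, then $\sigma_{F_t(\mathfrak C)}=\sigma_{\mathfrak C}s_t$ and $\ell(\sigma_{F_t(\mathfrak C)})=\ell(\sigma_{\mathfrak C})+1$; in particular $\sigma_{F_t(\mathfrak C)}>_R\sigma_{\mathfrak C}$. (ii) If $E_t(\mathfrak C)\neq0$, then $\sigma_{E_t(\mathfrak C)}=\sigma_{\mathfrak C}s_t$ and $\ell(\sigma_{E_t(\mathfrak C)})=\ell(\sigma_{\mathfrak C})-1$; in particular $\sigma_{E_t(\mathfrak C)}<_R\sigma_{\mathfrak C}$.
   Context: $I(d,n)$: $d$-subsets of $\{1,\dots,n\}$ as increasing sequences, ordered by $\underline i\le\underline j$ iff $i_k\le j_k$ for all $k$. Maximal chains $\mathfrak C:\underline i_r>\cdots>\underline i_0$ (from $(n-d+1)\cdots n$ to $12\cdots d$); chains compared lexicographically via concatenated strings $\underline i_r\cdots\underline i_0$; $\mathfrak C_{\mathrm{right}}$ the smallest. Root operators $f_{s,h}$ ($1\le h\le d$, $h\le s<n-d+h$): $f_{s,h}(i_1\cdots i_d)$ replaces $i_h=s$ by $s+1$ if $i_h=s$ and ($h=d$ or $i_{h+1}\ge s+2$), else $0$. Along a maximal chain $\underline i_t=f_{s_t,h_t}(\underline i_{t-1})$, each admissible pair occurring exactly once; $\tilde f_t:=f_{s_t,h_t}$ for $\mathfrak C_{\mathrm{right}}$; $\sigma_{\mathfrak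 C}\in\mathsf S_r$ is defined by: the operator from $\underline i_{t-1}$ to $\underline i_t$ in $\mathfrak C$ is $\tilde f_{\sigma_{\mathfrak C}(t)}$. For $1\le t\le r-1$, the Bruhat interval $[\underline i_{t-1},\underline i_{t+1}]$ has 3 or 4 elements; if 4, say $\{\underline i_{t-1},\underline i_t,\underline i'_t,\underline i_{t+1}\}$, then $\underline i_t$ is a right peak if $\underline i'_t>_{lex}\underline i_t$ and a left peak if $\underline i_t>_{lex}\underline i'_t$. $F_t(\mathfrak C)$ (resp. $E_t(\mathfrak C)$) is the chain obtained by replacing $\underline i_t$ by $\underline i'_t$ if $\underline i_t$ is a right (resp. left) peak, and $0$ otherwise. $s_t=(t,t+1)\in\mathsf S_r$, $\ell$ is Coxeter length on $\mathsf S_r$, and $\le_R$ is the right weak Bruhat order ($u\le_R v$ iff some reduced word of $v$ begins with a reduced word of $u$). *)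

theory Defs
  imports "HOL-Combinatorics.Transposition"
begin

text \<open>A d-subset of {1..n} is represented as its increasing sequence i_1 ... i_d
  (list position k-1 holds i_k).\<close>

definition Idn :: "nat \<Rightarrow> nat \<Rightarrow> nat list set" where
  "Idn d n = {x. length x = d \<and> sorted_wrt (<) x \<and> set x \<subseteq> {1..n}}"

definition ile :: "nat list \<Rightarrow> nat list \<Rightarrow> bool" where
  "ile x y \<longleftrightarrow> length x = length y \<and> (\<forall>k<length x. x ! k \<le> y ! k)"

definition iless :: "nat list \<Rightarrow> nat list \<Rightarrow> bool" where
  "iless x y \<longleftrightarrow> ile x y \<and> x \<noteq> y"

definition covers :: "nat \<Rightarrow> nat \<Rightarrow> nat list \<Rightarrow> nat list \<Rightarrow> bool" where
  "covers d n x y \<longleftrightarrow> x \<in> Idn d n \<and> y \<in> Idn d n \<and> iless x y \<and>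
     \<not> (\<exists>z\<in>Idn d n. iless x z \<and> iless z y)"

definition bottom :: "nat \<Rightarrow> nat list" where
  "bottom d = [1..<d+1]"

definition top :: "nat \<Rightarrow> nat \<Rightarrow> nat list" where
  "top d n = [n-d+1..<n+1]"

text \<open>A maximal chain i_r > ... > i_0 is represented by the list [i_0, ..., i_r]
  (so c ! t = i_t), going from 12...d to (n-d+1)...n by covering relations.\<close>

definition maxchain :: "nat \<Rightarrow> nat \<Rightarrow> nat list list \<Rightarrow> bool" where
  "maxchain d n c \<longleftrightarrow> c \<noteq> [] \<and> hd c = bottom d \<and> last c = top d n \<and>
     (\<forall>t. Suc t < length c \<longrightarrow> covers d n (c ! t) (c ! Suc t))"

definition lex_less :: "nat list \<Rightarrow> nat list \<Rightarrow> bool" where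
  "lex_less xs ys \<longleftrightarrow> (xs, ys) \<in> lexord {(a, b). a < b}"

text \<open>Chains are compared via the concatenated string i_r ... i_0.\<close>

definition chain_word :: "nat list list \<Rightarrow> nat list" where
  "chain_word c = concat (rev c)"

definition C_right :: "nat \<Rightarrow> nat \<Rightarrow> nat list list" where
  "C_right d n = (THE c. maxchain d n c \<and>
      (\<forall>c'. maxchain d n c' \<and> c' \<noteq> c \<longrightarrow> lex_less (chain_word c) (chain_word c')))"

definition admissible :: "nat \<Rightarrow> nat \<Rightarrow> nat \<times> nat \<Rightarrow> bool" where
  "admissible d n p \<longleftrightarrow> (case p of (s, h) \<Rightarrow> 1 \<le> h \<and> h \<le> d \<and> h \<le> s \<and> s < n - d + h)"

text \<open>f_{s,h}; the value 0 is rendered as None.\<close>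

definition froot :: "nat \<Rightarrow> nat \<Rightarrow> nat list \<Rightarrow> nat list option" where
  "froot s h x = (if x ! (h - 1) = s \<and> (h = length x \<or> x ! h \<ge> s + 2)
                  then Some (x[h - 1 := s + 1]) else None)"

definition step_op :: "nat \<Rightarrow> nat \<Rightarrow> nat list list \<Rightarrow> nat \<Rightarrow> nat \<times> nat" where
  "step_op d n c t = (THE p. admissible d n p \<and>
       froot (fst p) (snd p) (c ! (t - 1)) = Some (c ! t))"

definition sigma :: "nat \<Rightarrow> nat \<Rightarrow> nat list list \<Rightarrow> nat \<Rightarrow> nat" where
  "sigma d n c t = (if t \<in> {1..d*(n-d)}
      then (THE u. u \<in> {1..d*(n-d)} \<and> step_op d n (C_right d n) u = step_op d n c t)
      else t)"

definition interval :: "nat \<Rightarrow> nat \<Rightarrow> nat list \<Rightarrow> nat list \<Rightarrow> nat list set" where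
  "interval d n x y = {z \<in> Idn d n. ile x z \<and> ile z y}"

definition other_elt :: "nat \<Rightarrow> nat \<Rightarrow> nat list list \<Rightarrow> nat \<Rightarrow> nat list" where
  "other_elt d n c t = (THE z. z \<in> interval d n (c ! (t-1)) (c ! (t+1)) -
                                 {c ! (t-1), c ! t, c ! (t+1)})"

definition right_peak :: "nat \<Rightarrow> nat \<Rightarrow> nat list list \<Rightarrow> nat \<Rightarrow> bool" where
  "right_peak d n c t \<longleftrightarrow> card (interval d n (c ! (t-1)) (c ! (t+1))) = 4 \<and>
      lex_less (c ! t) (other_elt d n c t)"

definition left_peak :: "nat \<Rightarrow> nat \<Rightarrow> nat list list \<Rightarrow> nat \<Rightarrow> bool" where
  "left_peak d n c t \<longleftrightarrow> card (interval d n (c ! (t-1)) (c ! (t+1))) = 4 \<and>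
      lex_less (other_elt d n c t) (c ! t)"

text \<open>F_t and E_t; the value 0 is rendered as None.\<close>

definition F_op :: "nat \<Rightarrow> nat \<Rightarrow> nat \<Rightarrow> nat list list \<Rightarrow> nat list list option" where
  "F_op d n t c = (if right_peak d n c t then Some (c[t := other_elt d n c t]) else None)"

definition E_op :: "nat \<Rightarrow> nat \<Rightarrow> nat \<Rightarrow> nat list list \<Rightarrow> nat list list option" where
  "E_op d n t c = (if left_peak d n c t then Some (c[t := other_elt d n c t]) else None)"

definition simple_tr :: "nat \<Rightarrow> nat \<Rightarrow> nat" where
  "simple_tr i = Transposition.transpose i (Suc i)"

definition word_prod :: "nat list \<Rightarrow> nat \<Rightarrow> nat" where
  "word_prod ws = foldr (\<lambda>i p. simple_tr i \<circ> p) ws id"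

definition is_word :: "nat \<Rightarrow> (nat \<Rightarrow> nat) \<Rightarrow> nat list \<Rightarrow> bool" where
  "is_word r w ws \<longleftrightarrow> set ws \<subseteq> {1..<r} \<and> word_prod ws = w"

definition coxeter_length :: "nat \<Rightarrow> (nat \<Rightarrow> nat) \<Rightarrow> nat" where
  "coxeter_length r w = (LEAST k. \<exists>ws. is_word r w ws \<and> length ws = k)"

definition reduced_word :: "nat \<Rightarrow> (nat \<Rightarrow> nat) \<Rightarrow> nat list \<Rightarrow> bool" where
  "reduced_word r w ws \<longleftrightarrow> is_word r w ws \<and> length ws = coxeter_length r w"

definition weak_le_R :: "nat \<Rightarrow> (nat \<Rightarrow> nat) \<Rightarrow> (nat \<Rightarrow> nat) \<Rightarrow> bool" where
  "weak_le_R r u v \<longleftrightarrow> (\<exists>as bs. reduced_word r u as \<and> reduced_word r v (as @ bs))"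

definition weak_less_R :: "nat \<Rightarrow> (nat \<Rightarrow> nat) \<Rightarrow> (nat \<Rightarrow> nat) \<Rightarrow> bool" where
  "weak_less_R r u v \<longleftrightarrow> weak_le_R r u v \<and> u \<noteq> v"

end

theory Submission
  imports Defs
begin


definition plike :: "nat \<Rightarrow> (nat \<Rightarrow> nat) \<Rightarrow> bool" where
  "plike r w \<longleftrightarrow> w ` {1..r} \<subseteq> {1..r} \<and> inj_on w {1..r} \<and> (\<forall>x. x \<notin> {1..r} \<longrightarrow> w x = x)"

definition pairsT :: "nat \<Rightarrow> (nat \<times> nat) set" where
  "pairsT r = {(p,q). 1 \<le> p \<and> p < q \<and> q \<le> r}"

definition invset :: "nat \<Rightarrow> (nat \<Rightarrow> nat) \<Rightarrow> (nat \<times> nat) set" where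
  "invset r w = {pq \<in> pairsT r. w (snd pq) < w (fst pq)}"

definition ninv :: "nat \<Rightarrow> (nat \<Rightarrow> nat) \<Rightarrow> nat" where
  "ninv r w = card (invset r w)"

lemma finite_pairsT: "finite (pairsT r)"
proof -
  have "pairsT r \<subseteq> {0..r} \<times> {0..r}" by (auto simp: pairsT_def)
  then show ?thesis by (rule finite_subset) auto
qed

lemma finite_invset: "finite (invset r w)"
  unfolding invset_def using finite_pairsT by auto

lemma simple_tr_order:
  assumes "p < q" "\<not> (p = i \<and> q = Suc i)"
  shows "simple_tr i p < simple_tr i q"
  using assms unfolding simple_tr_def Transposition.transpose_def by auto

lemma simple_tr_invol[simp]: "simple_tr i (simple_tr i x) = x"
  unfolding simple_tr_def by simp

lemma simple_tr_range:
  assumes "1 \<le> i" "Suc i \<le> r" "1 \<le> p" "p \<le> r"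
  shows "1 \<le> simple_tr i p \<and> simple_tr i p \<le> r"
  using assms unfolding simple_tr_def Transposition.transpose_def by auto

lemma simple_tr_at[simp]: "simple_tr i i = Suc i" "simple_tr i (Suc i) = i"
  by (auto simp: simple_tr_def)

lemma simple_tr_not_e:
  assumes "p < q" "\<not> (p = i \<and> q = Suc i)"
  shows "\<not> (simple_tr i p = i \<and> simple_tr i q = Suc i)"
proof
  assume a: "simple_tr i p = i \<and> simple_tr i q = Suc i"
  have "p = simple_tr i (simple_tr i p)" by simp
  also have "\<dots> = Suc i" using a by simp
  finally have p: "p = Suc i" .
  have "q = simple_tr i (simple_tr i q)" by simp
  also have "\<dots> = i" using a by simp
  finally have "q = i" .
  then show False using p assms by simp
qed

lemma ninv_swap:
  assumes "1 \<le> i" "Suc i \<le> r"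
  shows "ninv r (w \<circ> simple_tr i) + (if w (Suc i) < w i then 1 else 0)
       = ninv r w + (if w i < w (Suc i) then 1 else 0)"
proof -
  let ?s = "simple_tr i"
  let ?e = "(i, Suc i)"
  let ?g = "map_prod ?s ?s"
  define A where "A = invset r w - {?e}"
  define B where "B = invset r (w \<circ> ?s) - {?e}"
  have gg: "?g (?g x) = x" for x by (cases x) simp
  have inj: "inj ?g"
    by (rule inj_on_inverseI[where g="?g"]) (rule gg)
  have gmap: "?g x \<in> A" if "x \<in> B" for x
  proof -
    obtain p q where x: "x = (p,q)" by (cases x)
    have h: "1 \<le> p" "p < q" "q \<le> r" "w (?s q) < w (?s p)" "\<not> (p = i \<and> q = Suc i)"
      using that unfolding B_def invset_def pairsT_def x by auto
    have "?s p < ?s q" using simple_tr_order[OF h(2) h(5)] .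
    moreover have "1 \<le> ?s p" "?s q \<le> r"
      using simple_tr_range[OF assms h(1)] simple_tr_range[OF assms, of q] h by auto
    moreover have "\<not> (?s p = i \<and> ?s q = Suc i)" using simple_tr_not_e[OF h(2) h(5)] .
    ultimately show ?thesis
      unfolding A_def invset_def pairsT_def x using h(4) by auto
  qed
  have gmap2: "?g x \<in> B" if "x \<in> A" for x
  proof -
    obtain p q where x: "x = (p,q)" by (cases x)
    have h: "1 \<le> p" "p < q" "q \<le> r" "w q < w p" "\<not> (p = i \<and> q = Suc i)"
      using that unfolding A_def invset_def pairsT_def x by auto
    have "?s p < ?s q" using simple_tr_order[OF h(2) h(5)] .
    moreover have "1 \<le> ?s p" "?s q \<le> r"
      using simple_tr_range[OF assms h(1)] simple_tr_range[OF assms, of q] h by auto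
    moreover have "\<not> (?s p = i \<and> ?s q = Suc i)" using simple_tr_not_e[OF h(2) h(5)] .
    moreover have "w (?s (?s q)) < w (?s (?s p))" using h(4) by simp
    ultimately show ?thesis
      unfolding B_def invset_def pairsT_def x by auto
  qed
  have "?g ` A = B"
  proof
    show "?g ` A \<subseteq> B" using gmap2 by (rule image_subsetI)
    show "B \<subseteq> ?g ` A"
    proof
      fix x assume "x \<in> B"
      then have "?g x \<in> A" by (rule gmap)
      then have "?g (?g x) \<in> ?g ` A" by (rule imageI)
      then show "x \<in> ?g ` A" by (simp only: gg)
    qed
  qed
  moreover have "card (?g ` A) = card A"
    by (rule card_image[OF inj_on_subset[OF inj subset_UNIV]])
  ultimately have cAB: "card B = card A" by simp
  have eT: "?e \<in> pairsT r" using assms by (auto simp: pairsT_def)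
  have i1: "invset r (w \<circ> ?s) = B \<union> (if w i < w (Suc i) then {?e} else {})"
    using eT unfolding B_def invset_def by auto
  have i2: "invset r w = A \<union> (if w (Suc i) < w i then {?e} else {})"
    using eT unfolding A_def invset_def by auto
  have f: "finite A" "finite B" unfolding A_def B_def using finite_invset by auto
  have n: "?e \<notin> A" "?e \<notin> B" unfolding A_def B_def by auto
  have c1: "card (invset r (w \<circ> ?s)) = card B + (if w i < w (Suc i) then 1 else 0)"
    unfolding i1 using f n by (cases "w i < w (Suc i)") auto
  have c2: "card (invset r w) = card A + (if w (Suc i) < w i then 1 else 0)"
    unfolding i2 using f n by (cases "w (Suc i) < w i") auto
  show ?thesis unfolding ninv_def c1 c2 cAB by simp
qed

lemma word_prod_Nil[simp]: "word_prod [] = id"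
  by (simp add: word_prod_def)

lemma word_prod_append: "word_prod (xs @ ys) = word_prod xs \<circ> word_prod ys"
proof -
  have "foldr (\<lambda>i p. simple_tr i \<circ> p) xs q = foldr (\<lambda>i p. simple_tr i \<circ> p) xs id \<circ> q" for q :: "nat \<Rightarrow> nat"
    by (induction xs) auto
  note F = this
  have "word_prod (xs @ ys) = foldr (\<lambda>i p. simple_tr i \<circ> p) xs (word_prod ys)"
    unfolding word_prod_def by simp
  also have "\<dots> = word_prod xs \<circ> word_prod ys"
    unfolding word_prod_def by (rule F)
  finally show ?thesis .
qed

lemma word_prod_snoc: "word_prod (xs @ [i]) = word_prod xs \<circ> simple_tr i"
proof -
  have "word_prod [i] = simple_tr i" by (simp add: word_prod_def)
  then show ?thesis by (simp add: word_prod_append)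
qed

lemma ninv_id: "ninv r id = 0"
proof -
  have "invset r id = {}" unfolding invset_def pairsT_def by auto
  then show ?thesis unfolding ninv_def by simp
qed

lemma ninv_id': "ninv r (\<lambda>x. x) = 0"
  using ninv_id by (simp add: id_def)

lemma ninv_le_word:
  assumes "set ws \<subseteq> {1..<r}"
  shows "ninv r (word_prod ws) \<le> length ws"
  using assms
proof (induction ws rule: rev_induct)
  case Nil then show ?case by (simp add: ninv_id')
next
  case (snoc i ws)
  then have i: "1 \<le> i" "Suc i \<le> r" by auto
  have "ninv r (word_prod ws \<circ> simple_tr i) \<le> ninv r (word_prod ws) + 1"
    using ninv_swap[OF i, of "word_prod ws"] by (auto split: if_splits)
  moreover have "ninv r (word_prod ws) \<le> length ws" using snoc by auto
  ultimately show ?case unfolding word_prod_snoc length_append_singleton by linarith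
qed

lemma plike_comp:
  assumes "plike r w" "1 \<le> i" "Suc i \<le> r"
  shows "plike r (w \<circ> simple_tr i)"
proof -
  have a: "simple_tr i ` {1..r} \<subseteq> {1..r}" using simple_tr_range[OF assms(2,3)] by auto
  have b: "inj_on (simple_tr i) {1..r}"
    by (metis inj_on_inverseI simple_tr_invol)
  have c: "simple_tr i x = x" if "x \<notin> {1..r}" for x
    using that assms(2,3) unfolding simple_tr_def Transposition.transpose_def by auto
  have iw: "inj_on w {1..r}" using assms(1) unfolding plike_def by blast
  have "inj_on w (simple_tr i ` {1..r})" by (rule inj_on_subset[OF iw a])
  then have "inj_on (w \<circ> simple_tr i) {1..r}" by (rule comp_inj_on[OF b])
  then show ?thesis using assms(1) a c unfolding plike_def
    by (auto simp: image_subset_iff)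
qed

lemma plike_incr_id:
  assumes "plike r w" "\<And>p q. 1 \<le> p \<Longrightarrow> p < q \<Longrightarrow> q \<le> r \<Longrightarrow> w p < w q"
  shows "w = id"
proof
  fix x
  show "w x = id x"
  proof (cases "x \<in> {1..r}")
    case False then show ?thesis using assms(1) by (auto simp: plike_def)
  next
    case True
    have lo: "k \<le> w k" if "1 \<le> k" "k \<le> r" for k
      using that
    proof (induction k)
      case 0 then show ?case by simp
    next
      case (Suc k)
      show ?case
      proof (cases "k = 0")
        case True
        have "1 \<in> {1..r}" using True Suc by auto
        then have "w 1 \<in> {1..r}" using assms(1) unfolding plike_def by blast
        then show ?thesis using True by auto
      next
        case False
        then have "k \<le> w k" using Suc by auto
        moreover have "w k < w (Suc k)" using assms(2)[of k "Suc k"] Suc False by auto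
        ultimately show ?thesis by simp
      qed
    qed
    have hi: "w (r - j) \<le> r - j" if "j < r" for j
      using that
    proof (induction j)
      case 0 then show ?case using assms(1) by (auto simp: plike_def image_subset_iff)
    next
      case (Suc j)
      have "w (r - Suc j) < w (r - j)" using assms(2)[of "r - Suc j" "r - j"] Suc by auto
      then show ?case using Suc by auto
    qed
    have "w x \<le> x" using hi[of "r - x"] True by auto
    then show ?thesis using lo[of x] True by auto
  qed
qed

lemma ninv_zero_id:
  assumes "plike r w" "ninv r w = 0"
  shows "w = id"
proof (rule plike_incr_id[OF assms(1)])
  fix p q assume pq: "1 \<le> p" "p < q" "q \<le> r"
  have "invset r w = {}" using assms(2) finite_invset unfolding ninv_def by auto
  then have "\<not> w q < w p" using pq unfolding invset_def pairsT_def by auto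
  then have "w p \<le> w q" by simp
  moreover have "w p \<noteq> w q"
  proof
    assume e: "w p = w q"
    have iw: "inj_on w {1..r}" using assms(1) unfolding plike_def by blast
    have pi: "p \<in> {1..r}" "q \<in> {1..r}" using pq by auto
    have "p = q" by (rule inj_onD[OF iw e pi])
    then show False using pq by simp
  qed
  ultimately show "w p < w q" by simp
qed

lemma descent_exists:
  assumes "ninv r w \<noteq> 0"
  shows "\<exists>i. 1 \<le> i \<and> Suc i \<le> r \<and> w (Suc i) < w i"
proof (rule ccontr)
  assume "\<not> ?thesis"
  then have step: "w i \<le> w (Suc i)" if "1 \<le> i" "Suc i \<le> r" for i
    using that not_less by blast
  have mono: "w p \<le> w q" if "1 \<le> p" "p \<le> q" "q \<le> r" for p q
    using that
  proof (induction q)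
    case 0 then show ?case by simp
  next
    case (Suc q)
    show ?case
    proof (cases "p = Suc q")
      case True then show ?thesis by simp
    next
      case False
      then have "w p \<le> w q" using Suc by auto
      also have "w q \<le> w (Suc q)" using step[of q] Suc False by auto
      finally show ?thesis .
    qed
  qed
  have "invset r w = {}"
  proof (rule equals0I)
    fix x assume x: "x \<in> invset r w"
    obtain p q where pq: "x = (p,q)" by (cases x)
    have h: "1 \<le> p" "p < q" "q \<le> r" "w q < w p" using x unfolding pq invset_def pairsT_def by auto
    have "w p \<le> w q" using mono[of p q] h by simp
    then show False using h by simp
  qed
  then show False using assms unfolding ninv_def by simp
qed

lemma exists_word:
  assumes "plike r w"
  shows "\<exists>ws. is_word r w ws \<and> length ws = ninv r w"
  using assms
proof (induction "ninv r w" arbitrary: w)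
  case 0
  then have "w = id" using ninv_zero_id by simp
  then show ?case using 0 by (auto simp: is_word_def)
next
  case (Suc k)
  obtain i where i: "1 \<le> i" "Suc i \<le> r" "w (Suc i) < w i"
    using descent_exists[of r w] Suc.hyps(2) by auto
  let ?w' = "w \<circ> simple_tr i"
  have "ninv r ?w' + 1 = ninv r w" using ninv_swap[OF i(1,2), of w] i(3) by auto
  then have k: "k = ninv r ?w'" using Suc.hyps(2) by simp
  obtain ws where ws: "is_word r ?w' ws" "length ws = ninv r ?w'"
    using Suc.hyps(1)[OF k plike_comp[OF Suc.prems i(1,2)]] by blast
  have "word_prod (ws @ [i]) = w"
    using ws(1) by (auto simp: is_word_def word_prod_snoc comp_assoc)
  then have "is_word r w (ws @ [i])" using ws(1) i by (auto simp: is_word_def)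
  then show ?case using ws(2) k Suc.hyps(2) by auto
qed

lemma coxeter_length_eq:
  assumes "plike r w"
  shows "coxeter_length r w = ninv r w"
  unfolding coxeter_length_def
proof (rule Least_equality)
  show "\<exists>ws. is_word r w ws \<and> length ws = ninv r w" using exists_word[OF assms] .
  fix k assume "\<exists>ws. is_word r w ws \<and> length ws = k"
  then obtain ws where "is_word r w ws" "length ws = k" by blast
  then show "ninv r w \<le> k" using ninv_le_word[of ws r] by (auto simp: is_word_def)
qed

lemma coxeter_up:
  assumes "plike r w" "1 \<le> i" "Suc i \<le> r" "w i < w (Suc i)"
  shows "coxeter_length r (w \<circ> simple_tr i) = coxeter_length r w + 1
       \<and> weak_less_R r w (w \<circ> simple_tr i)"
proof -
  have pw': "plike r (w \<circ> simple_tr i)" using plike_comp assms by blast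
  have n: "ninv r (w \<circ> simple_tr i) = ninv r w + 1"
    using ninv_swap[OF assms(2,3), of w] assms(4) by auto
  have L: "coxeter_length r (w \<circ> simple_tr i) = coxeter_length r w + 1"
    using n coxeter_length_eq[OF assms(1)] coxeter_length_eq[OF pw'] by simp
  obtain ws where ws: "is_word r w ws" "length ws = ninv r w"
    using exists_word[OF assms(1)] by blast
  have r1: "reduced_word r w ws"
    using ws coxeter_length_eq[OF assms(1)] by (simp add: reduced_word_def)
  have "is_word r (w \<circ> simple_tr i) (ws @ [i])"
    using ws(1) assms(2,3) by (auto simp: is_word_def word_prod_snoc)
  then have r2: "reduced_word r (w \<circ> simple_tr i) (ws @ [i])"
    using ws(2) n coxeter_length_eq[OF pw'] by (simp add: reduced_word_def)
  have "w \<noteq> w \<circ> simple_tr i" using L by auto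
  then show ?thesis using L r1 r2 unfolding weak_less_R_def weak_le_R_def by blast
qed



definition inc :: "nat list \<Rightarrow> nat \<Rightarrow> nat list" where
  "inc x j = x[j := Suc (x ! j)]"

lemma inc_len[simp]: "length (inc x j) = length x"
  by (simp add: inc_def)

lemma inc_nth: "j < length x \<Longrightarrow> inc x j ! i = (if i = j then Suc (x ! j) else x ! i)"
  by (simp add: inc_def nth_list_update)

lemma Idn_len: "x \<in> Idn d n \<Longrightarrow> length x = d"
  by (simp add: Idn_def)

lemma Idn_less: "x \<in> Idn d n \<Longrightarrow> i < j \<Longrightarrow> j < d \<Longrightarrow> x ! i < x ! j"
  unfolding Idn_def by (auto intro: sorted_wrt_nth_less)

lemma Idn_range: "x \<in> Idn d n \<Longrightarrow> i < d \<Longrightarrow> 1 \<le> x ! i \<and> x ! i \<le> n"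
  unfolding Idn_def using nth_mem by fastforce

lemma Idn_gap: "x \<in> Idn d n \<Longrightarrow> i \<le> j \<Longrightarrow> j < d \<Longrightarrow> x ! i + (j - i) \<le> x ! j"
proof (induction j)
  case 0 then show ?case by simp
next
  case (Suc j)
  show ?case
  proof (cases "i = Suc j")
    case True then show ?thesis by simp
  next
    case False
    then have "x ! i + (j - i) \<le> x ! j" using Suc by auto
    moreover have "x ! j < x ! Suc j" using Idn_less[OF Suc.prems(1), of j "Suc j"] Suc.prems by simp
    ultimately show ?thesis using False Suc.prems by simp
  qed
qed

lemma Idn_lo: "x \<in> Idn d n \<Longrightarrow> i < d \<Longrightarrow> Suc i \<le> x ! i"
  using Idn_gap[of x d n 0 i] Idn_range[of x d n 0] by simp

lemma Idn_hi: "x \<in> Idn d n \<Longrightarrow> i < d \<Longrightarrow> x ! i + d \<le> n + Suc i"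
proof -
  assume x: "x \<in> Idn d n" and i: "i < d"
  have "x ! i + (d - 1 - i) \<le> x ! (d - 1)" using Idn_gap[OF x, of i "d - 1"] i by simp
  moreover have "x ! (d - 1) \<le> n" using Idn_range[OF x, of "d - 1"] i by simp
  ultimately show ?thesis using i by simp
qed

lemma Idn_intro:
  assumes "length x = d" "\<And>i. Suc i < d \<Longrightarrow> x ! i < x ! Suc i"
    "\<And>i. i < d \<Longrightarrow> 1 \<le> x ! i \<and> x ! i \<le> n"
  shows "x \<in> Idn d n"
proof -
  have t: "transp ((<) :: nat \<Rightarrow> nat \<Rightarrow> bool)" by (auto intro: transpI)
  have "sorted_wrt (<) x" using sorted_wrt_iff_nth_Suc_transp[OF t] assms by auto
  moreover have "set x \<subseteq> {1..n}"
  proof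
    fix v assume "v \<in> set x"
    then obtain i where "i < length x" "v = x ! i" by (auto simp: in_set_conv_nth)
    then show "v \<in> {1..n}" using assms(1,3) by auto
  qed
  ultimately show ?thesis using assms(1) by (simp add: Idn_def)
qed

lemma sum_list_strict:
  assumes "ile x z" "x \<noteq> z"
  shows "sum_list x < sum_list z"
proof -
  have len: "length x = length z" using assms(1) by (simp add: ile_def)
  have le: "\<forall>i\<in>{0..<length x}. x ! i \<le> z ! i" using assms(1) by (simp add: ile_def)
  obtain i where i: "i < length x" "x ! i \<noteq> z ! i"
    using assms(2) len nth_equalityI by blast
  then have "\<exists>i\<in>{0..<length x}. x ! i < z ! i" using le by force
  then have "(\<Sum>i=0..<length x. x ! i) < (\<Sum>i=0..<length x. z ! i)"
    using le by (intro sum_strict_mono_ex1) auto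
  then show ?thesis by (simp add: sum_list_sum_nth len)
qed

lemma sum_list_inc: "j < length x \<Longrightarrow> sum_list (inc x j) = Suc (sum_list x)"
proof -
  assume j: "j < length x"
  have "x ! j \<le> sum_list x" using j by (metis elem_le_sum_list)
  then show ?thesis using j by (simp add: inc_def sum_list_update)
qed

lemma ile_refl: "ile x x" by (simp add: ile_def)

lemma ile_trans: "ile x y \<Longrightarrow> ile y z \<Longrightarrow> ile x z"
  unfolding ile_def by (metis le_trans)

lemma ile_inc: "j < length x \<Longrightarrow> ile x (inc x j)"
  unfolding ile_def by (simp add: inc_nth)

lemma inc_neq: "j < length x \<Longrightarrow> inc x j \<noteq> x"
  by (metis inc_nth n_not_Suc_n)

lemma covers_intro:
  assumes "x \<in> Idn d n" "inc x j \<in> Idn d n" "j < d"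
  shows "covers d n x (inc x j)"
proof -
  have jl: "j < length x" using assms Idn_len by auto
  have il: "iless x (inc x j)" using ile_inc[OF jl] inc_neq[OF jl] by (simp add: iless_def)
  have "\<not> (iless x z \<and> iless z (inc x j))" for z
  proof
    assume "iless x z \<and> iless z (inc x j)"
    then have "sum_list x < sum_list z" "sum_list z < sum_list (inc x j)"
      using sum_list_strict by (auto simp: iless_def)
    then show False using sum_list_inc[OF jl] by simp
  qed
  then show ?thesis using assms il by (auto simp: covers_def)
qed

lemma covers_char:
  assumes "covers d n x y"
  shows "\<exists>j<d. y = inc x j"
proof -
  have x: "x \<in> Idn d n" and y: "y \<in> Idn d n" and xy: "ile x y" "x \<noteq> y"
    and nz: "\<And>z. z \<in> Idn d n \<Longrightarrow> \<not> (iless x z \<and> iless z y)"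
    using assms by (auto simp: covers_def iless_def)
  have lx: "length x = d" and ly: "length y = d" using x y Idn_len by auto
  define D where "D = {i. i < d \<and> x ! i < y ! i}"
  have le: "x ! i \<le> y ! i" if "i < d" for i using xy(1) that lx by (simp add: ile_def)
  have "D \<noteq> {}"
  proof
    assume "D = {}"
    then have "\<forall>i<d. x ! i = y ! i" using le unfolding D_def by (metis (mono_tags) empty_iff le_neq_implies_less mem_Collect_eq)
    then have "x = y" using lx ly by (auto intro: nth_equalityI)
    then show False using xy by simp
  qed
  moreover have fD: "finite D" unfolding D_def by simp
  ultimately have jD: "Max D \<in> D" using Max_in by blast
  define j where "j = Max D"
  have j: "j < d" "x ! j < y ! j" using jD unfolding j_def D_def by auto
  have above: "x ! i = y ! i" if "j < i" "i < d" for i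
  proof -
    have "i \<notin> D" using that Max_ge[OF fD, of i] unfolding j_def by auto
    then show ?thesis using le[OF that(2)] that unfolding D_def by auto
  qed
  let ?z = "inc x j"
  have jl: "j < length x" using j lx by simp
  have zn: "?z ! i = (if i = j then Suc (x ! j) else x ! i)" for i using inc_nth[OF jl] .
  have zI: "?z \<in> Idn d n"
  proof (rule Idn_intro)
    show "length ?z = d" using lx by simp
    fix i assume i: "Suc i < d"
    show "?z ! i < ?z ! Suc i"
    proof (cases "i = j")
      case True
      have "Suc (x ! j) \<le> y ! j" using j by simp
      also have "y ! j < y ! Suc j" using Idn_less[OF y, of j "Suc j"] i True by simp
      also have "y ! Suc j = x ! Suc j" using above[of "Suc j"] i True by simp
      finally show ?thesis using zn True by simp
    next
      case False
      show ?thesis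
      proof (cases "Suc i = j")
        case True
        then show ?thesis using zn Idn_less[OF x, of i "Suc i"] i by auto
      next
        case False
        then show ?thesis using zn Idn_less[OF x, of i "Suc i"] i \<open>i \<noteq> j\<close> by auto
      qed
    qed
  next
    fix i assume i: "i < d"
    show "1 \<le> ?z ! i \<and> ?z ! i \<le> n"
      using zn[of i] Idn_range[OF x i] Idn_range[OF y i] j i by auto
  qed
  have "ile ?z y"
    unfolding ile_def using zn le j lx ly by auto
  moreover have "iless x ?z" using ile_inc[OF jl] inc_neq[OF jl] by (simp add: iless_def)
  ultimately have "?z = y" using nz[OF zI] by (auto simp: iless_def)
  then show ?thesis using j by auto
qed


lemma bottom_nth: "i < d \<Longrightarrow> bottom d ! i = Suc i"
  by (simp add: bottom_def nth_upt del: upt_Suc)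

lemma top_nth: "i < d \<Longrightarrow> d \<le> n \<Longrightarrow> top d n ! i = n - d + Suc i"
  by (simp add: top_def nth_upt del: upt_Suc)

lemma bottom_len[simp]: "length (bottom d) = d" by (simp add: bottom_def del: upt_Suc)
lemma top_len: "d \<le> n \<Longrightarrow> length (top d n) = d" by (simp add: top_def del: upt_Suc)

lemma bottom_Idn: "d \<le> n \<Longrightarrow> bottom d \<in> Idn d n"
  by (rule Idn_intro) (auto simp: bottom_nth)

lemma top_Idn: "d \<le> n \<Longrightarrow> top d n \<in> Idn d n"
  by (rule Idn_intro) (auto simp: top_nth top_len)

lemma chain_covers: "maxchain d n c \<Longrightarrow> Suc t < length c \<Longrightarrow> covers d n (c ! t) (c ! Suc t)"
  by (simp add: maxchain_def)

lemma chain_hd: "maxchain d n c \<Longrightarrow> c ! 0 = bottom d"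
  unfolding maxchain_def by (metis hd_conv_nth)

lemma chain_last: "maxchain d n c \<Longrightarrow> c ! (length c - 1) = top d n"
  unfolding maxchain_def by (metis last_conv_nth)

lemma chain_Idn:
  assumes "maxchain d n c" "d \<le> n" "t < length c"
  shows "c ! t \<in> Idn d n"
proof (cases "Suc t < length c")
  case True then show ?thesis using chain_covers[OF assms(1) True] by (simp add: covers_def)
next
  case False
  show ?thesis
  proof (cases t)
    case 0 then show ?thesis using chain_hd[OF assms(1)] bottom_Idn[OF assms(2)] by simp
  next
    case (Suc t')
    then have "Suc t' < length c" using assms(3) by simp
    then show ?thesis using chain_covers[OF assms(1), of t'] Suc by (simp add: covers_def)
  qed
qed

lemma chain_step:
  assumes "maxchain d n c" "Suc t < length c"
  shows "\<exists>j<d. c ! Suc t = inc (c ! t) j"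
  using covers_char[OF chain_covers[OF assms]] .

lemma chain_sum:
  assumes "maxchain d n c" "d \<le> n" "t < length c"
  shows "sum_list (c ! t) = sum_list (bottom d) + t"
  using assms(3)
proof (induction t)
  case 0 then show ?case using chain_hd[OF assms(1)] by simp
next
  case (Suc t)
  obtain j where j: "j < d" "c ! Suc t = inc (c ! t) j" using chain_step[OF assms(1) Suc.prems] by blast
  have "length (c ! t) = d" using chain_Idn[OF assms(1,2), of t] Suc.prems Idn_len by simp
  then show ?case using Suc j sum_list_inc[of j "c ! t"] by simp
qed

lemma sum_top:
  assumes "d \<le> n"
  shows "sum_list (top d n) = sum_list (bottom d) + d * (n - d)"
proof -
  have "sum_list (top d n) = (\<Sum>i=0..<d. top d n ! i)" by (simp add: sum_list_sum_nth top_len[OF assms])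
  also have "\<dots> = (\<Sum>i=0..<d. bottom d ! i + (n - d))"
    using assms by (intro sum.cong) (auto simp: top_nth bottom_nth)
  also have "\<dots> = (\<Sum>i=0..<d. bottom d ! i) + d * (n - d)" by (simp add: sum.distrib)
  also have "(\<Sum>i=0..<d. bottom d ! i) = sum_list (bottom d)" by (simp add: sum_list_sum_nth)
  finally show ?thesis .
qed

lemma chain_len:
  assumes "maxchain d n c" "d \<le> n"
  shows "length c = Suc (d * (n - d))"
proof -
  have ne: "length c > 0" using assms(1) by (simp add: maxchain_def)
  have "sum_list (c ! (length c - 1)) = sum_list (bottom d) + (length c - 1)"
    using chain_sum[OF assms, of "length c - 1"] ne by linarith
  then have "sum_list (top d n) = sum_list (bottom d) + (length c - 1)"
    using chain_last[OF assms(1)] by simp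
  then show ?thesis using sum_top[OF assms(2)] ne by linarith
qed

lemma chain_ile:
  assumes "maxchain d n c" "d \<le> n" "i \<le> j" "j < length c"
  shows "ile (c ! i) (c ! j)"
  using assms(3,4)
proof (induction j)
  case 0 then show ?case by (simp add: ile_refl)
next
  case (Suc j)
  show ?case
  proof (cases "i = Suc j")
    case True then show ?thesis by (simp add: ile_refl)
  next
    case False
    then have "ile (c ! i) (c ! j)" using Suc by simp
    moreover obtain a where a: "a < d" "c ! Suc j = inc (c ! j) a" using chain_step[OF assms(1) Suc.prems(2)] by blast
    moreover have "length (c ! j) = d" using chain_Idn[OF assms(1,2), of j] Suc.prems Idn_len by simp
    ultimately show ?thesis using ile_trans ile_inc by metis
  qed
qed

lemma adm_inc:
  assumes "x \<in> Idn d n" "inc x j \<in> Idn d n" "j < d"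
  shows "admissible d n (x ! j, Suc j)"
proof -
  have jl: "j < length x" using assms Idn_len by auto
  have "Suc j \<le> x ! j" using Idn_lo[OF assms(1,3)] .
  moreover have "x ! j < n - d + Suc j"
  proof -
    have "inc x j ! j + d \<le> n + Suc j" using Idn_hi[OF assms(2,3)] .
    then show ?thesis using inc_nth[OF jl, of j] by simp
  qed
  ultimately show ?thesis using assms(3) by (simp add: admissible_def)
qed

lemma step_op_inc:
  assumes "x \<in> Idn d n" "inc x j \<in> Idn d n" "j < d"
    and "c ! (u - 1) = x" "c ! u = inc x j"
  shows "step_op d n c u = (x ! j, Suc j)"
proof -
  have jl: "j < length x" using assms Idn_len by auto
  have fr: "froot (x ! j) (Suc j) x = Some (inc x j)"
  proof -
    have "Suc j = length x \<or> x ! j + 2 \<le> x ! Suc j"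
    proof (cases "Suc j < d")
      case True
      have "inc x j ! j < inc x j ! Suc j" using Idn_less[OF assms(2), of j "Suc j"] True by simp
      then show ?thesis using inc_nth[OF jl] by simp
    next
      case False then show ?thesis using assms(3) jl Idn_len[OF assms(1)] by simp
    qed
    then show ?thesis by (simp add: froot_def inc_def)
  qed
  have E: "admissible d n (x ! j, Suc j) \<and> froot (fst (x ! j, Suc j)) (snd (x ! j, Suc j)) (c ! (u - 1)) = Some (c ! u)"
    using adm_inc[OF assms(1-3)] fr assms(4,5) by simp
  have U: "p = (x ! j, Suc j)" if p: "admissible d n p \<and> froot (fst p) (snd p) (c ! (u - 1)) = Some (c ! u)" for p
  proof -
    obtain s h where sh: "p = (s, h)" by (cases p)
    have h: "1 \<le> h" "h \<le> d" using p sh by (auto simp: admissible_def)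
    have fr: "froot s h x = Some (inc x j)" using p sh assms(4,5) by simp
    then have xs: "x ! (h - 1) = s" and eq: "x[h - 1 := Suc s] = inc x j"
      unfolding froot_def by (auto split: if_splits)
    have "h - 1 = j"
    proof (rule ccontr)
      assume ne: "h - 1 \<noteq> j"
      have "x[h - 1 := Suc s] ! j = x ! j" using ne by simp
      moreover have "inc x j ! j = Suc (x ! j)" using inc_nth[OF jl] by simp
      ultimately show False using eq by simp
    qed
    then show "p = (x ! j, Suc j)" using sh xs h by auto
  qed
  show ?thesis unfolding step_op_def
  proof (rule the_equality)
    show "admissible d n (x ! j, Suc j) \<and> froot (fst (x ! j, Suc j)) (snd (x ! j, Suc j)) (c ! (u - 1)) = Some (c ! u)"
      by (rule E)
  next
    fix p assume "admissible d n p \<and> froot (fst p) (snd p) (c ! (u - 1)) = Some (c ! u)"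
    then show "p = (x ! j, Suc j)" by (rule U)
  qed
qed


definition CRel :: "nat \<Rightarrow> nat \<Rightarrow> nat \<Rightarrow> nat list" where
  "CRel d m u = map (\<lambda>i. Suc i + min m (u - (d - Suc i) * m)) [0..<d]"

lemma CRel_len[simp]: "length (CRel d m u) = d"
  by (simp add: CRel_def)

lemma CRel_nth: "i < d \<Longrightarrow> CRel d m u ! i = Suc i + min m (u - (d - Suc i) * m)"
  by (simp add: CRel_def)

lemma CRel_Idn: "CRel d m u \<in> Idn d (d + m)"
proof (rule Idn_intro)
  fix i assume i: "Suc i < d"
  have "(d - Suc (Suc i)) * m \<le> (d - Suc i) * m" by (intro mult_le_mono1) simp
  then have "u - (d - Suc i) * m \<le> u - (d - Suc (Suc i)) * m" by (rule diff_le_mono2)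
  then have "min m (u - (d - Suc i) * m) \<le> min m (u - (d - Suc (Suc i)) * m)" by simp
  moreover have "CRel d m u ! i = Suc i + min m (u - (d - Suc i) * m)" using i by (simp add: CRel_nth)
  moreover have "CRel d m u ! Suc i = Suc (Suc i) + min m (u - (d - Suc (Suc i)) * m)" using i by (simp add: CRel_nth)
  ultimately show "CRel d m u ! i < CRel d m u ! Suc i" by linarith
next
  fix i assume i: "i < d"
  show "1 \<le> CRel d m u ! i \<and> CRel d m u ! i \<le> d + m" using i CRel_nth[OF i, of m u] by simp
qed simp

lemma CRel_0: "CRel d m 0 = bottom d"
  by (rule nth_equalityI) (auto simp: CRel_nth bottom_nth)

lemma CRel_top: "CRel d m (d * m) = top d (d + m)"
proof (rule nth_equalityI)
  show "length (CRel d m (d * m)) = length (top d (d + m))" by (simp add: top_len)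
  fix i assume "i < length (CRel d m (d * m))"
  then have i: "i < d" by simp
  have "(d - Suc i) * m + m = (d - i) * m" using i by (simp add: Suc_diff_Suc[symmetric] algebra_simps)
  also have "\<dots> \<le> d * m" by (intro mult_le_mono1) simp
  finally have "m \<le> d * m - (d - Suc i) * m" by simp
  then show "CRel d m (d * m) ! i = top d (d + m) ! i" using i by (simp add: CRel_nth top_nth)
qed

lemma amt_cases:
  assumes u: "u = q * m + \<rho>" and r: "\<rho> < m"
  shows "k = q \<Longrightarrow> min m (u - k * m) = \<rho> \<and> min m (Suc u - k * m) = Suc \<rho>"
    and "k < q \<Longrightarrow> min m (u - k * m) = m \<and> min m (Suc u - k * m) = m"
    and "q < k \<Longrightarrow> min m (u - k * m) = 0 \<and> min m (Suc u - k * m) = 0"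
proof -
  assume "k = q" then show "min m (u - k * m) = \<rho> \<and> min m (Suc u - k * m) = Suc \<rho>" using u r by simp
next
  assume "k < q"
  then have "Suc k * m \<le> q * m" by (intro mult_le_mono1) simp
  then have "k * m + m \<le> u" using u by simp
  then show "min m (u - k * m) = m \<and> min m (Suc u - k * m) = m" by simp
next
  assume "q < k"
  then have "Suc q * m \<le> k * m" by (intro mult_le_mono1) simp
  then have "Suc u \<le> k * m" using u r by simp
  then show "min m (u - k * m) = 0 \<and> min m (Suc u - k * m) = 0" by simp
qed

lemma CRel_step:
  assumes "u < d * m"
  defines "j \<equiv> d - Suc (u div m)"
  shows "CRel d m (Suc u) = inc (CRel d m u) j"
    and "CRel d m u ! j = Suc j + u mod m"
    and "j < d"
    and "\<And>i. i < j \<Longrightarrow> CRel d m (Suc u) ! i = Suc i"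
proof -
  have m: "m > 0" using assms(1) by (cases m) auto
  have q: "u div m < d" using assms(1) by (simp add: less_mult_imp_div_less)
  have u: "u = (u div m) * m + u mod m" by simp
  have r: "u mod m < m" using m by simp
  note A = amt_cases[OF u r]
  show jd: "j < d" using q unfolding j_def by simp
  have kj: "d - Suc j = u div m" using q unfolding j_def by simp
  show "CRel d m u ! j = Suc j + u mod m"
    using jd CRel_nth[OF jd, of m u] A(1)[OF kj] by simp
  show "CRel d m (Suc u) = inc (CRel d m u) j"
  proof (rule nth_equalityI)
    show "length (CRel d m (Suc u)) = length (inc (CRel d m u) j)" by simp
    fix i assume "i < length (CRel d m (Suc u))"
    then have i: "i < d" by simp
    have jl: "j < length (CRel d m u)" using jd by simp
    show "CRel d m (Suc u) ! i = inc (CRel d m u) j ! i"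
    proof (cases "i = j")
      case True then show ?thesis using A(1)[OF kj] CRel_nth[OF i] inc_nth[OF jl] by simp
    next
      case False
      show ?thesis
      proof (cases "i < j")
        case True
        then have "u div m < d - Suc i" using jd unfolding j_def by simp
        then show ?thesis using A(3)[of "d - Suc i"] CRel_nth[OF i] inc_nth[OF jl] False by simp
      next
        case False
        then have "d - Suc i < u div m" using \<open>i \<noteq> j\<close> i q unfolding j_def by simp
        then show ?thesis using A(2)[of "d - Suc i"] CRel_nth[OF i] inc_nth[OF jl] \<open>i \<noteq> j\<close> by simp
      qed
    qed
  qed
  fix i assume ij: "i < j"
  then have i: "i < d" using jd by simp
  have "u div m < d - Suc i" using ij jd unfolding j_def by simp
  then show "CRel d m (Suc u) ! i = Suc i" using A(3)[of "d - Suc i"] CRel_nth[OF i] by simp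
qed


definition CR :: "nat \<Rightarrow> nat \<Rightarrow> nat list list" where
  "CR d m = map (CRel d m) [0..<Suc (d * m)]"

lemma CR_len[simp]: "length (CR d m) = Suc (d * m)"
  by (simp add: CR_def del: upt_Suc)

lemma CR_nth: "u \<le> d * m \<Longrightarrow> CR d m ! u = CRel d m u"
  by (simp add: CR_def nth_upt del: upt_Suc)

lemma CR_maxchain:
  assumes "d < n"
  shows "maxchain d n (CR d (n - d))"
proof -
  let ?m = "n - d"
  have n: "n = d + ?m" using assms by simp
  have ne: "CR d ?m \<noteq> []" by (metis CR_len list.size(3) nat.simps(3))
  have "hd (CR d ?m) = bottom d" using ne CR_nth[of 0 d ?m] CRel_0 by (simp add: hd_conv_nth)
  moreover have "last (CR d ?m) = top d n"
    using ne CR_nth[of "d * ?m" d ?m] CRel_top[of d ?m] n by (simp add: last_conv_nth)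
  moreover have "covers d n (CR d ?m ! t) (CR d ?m ! Suc t)" if t: "Suc t < length (CR d ?m)" for t
  proof -
    have tl: "t < d * ?m" using t by simp
    have "CR d ?m ! t = CRel d ?m t" "CR d ?m ! Suc t = CRel d ?m (Suc t)" using tl by (auto simp: CR_nth)
    moreover have "CRel d ?m (Suc t) = inc (CRel d ?m t) (d - Suc (t div ?m))" using CRel_step(1)[OF tl] .
    moreover have "CRel d ?m t \<in> Idn d n" "CRel d ?m (Suc t) \<in> Idn d n" using CRel_Idn n by metis+
    ultimately show ?thesis using covers_intro CRel_step(3)[OF tl] by metis
  qed
  ultimately show ?thesis using ne by (simp add: maxchain_def)
qed

lemma step_op_CR:
  assumes "d < n" "1 \<le> u" "u \<le> d * (n - d)"
  shows "step_op d n (CR d (n - d)) u =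
     (Suc (d - Suc ((u - 1) div (n - d))) + (u - 1) mod (n - d), Suc (d - Suc ((u - 1) div (n - d))))"
proof -
  let ?m = "n - d"
  let ?j = "d - Suc ((u - 1) div ?m)"
  have n: "n = d + ?m" using assms by simp
  have ul: "u - 1 < d * ?m" using assms by simp
  have x: "CRel d ?m (u - 1) \<in> Idn d n" and y: "CRel d ?m (Suc (u - 1)) \<in> Idn d n" using CRel_Idn n by metis+
  have st: "CRel d ?m (Suc (u - 1)) = inc (CRel d ?m (u - 1)) ?j" using CRel_step(1)[OF ul] .
  have c1: "CR d ?m ! (u - 1) = CRel d ?m (u - 1)" using assms by (simp add: CR_nth)
  have c2: "CR d ?m ! u = inc (CRel d ?m (u - 1)) ?j" using assms st by (simp add: CR_nth)
  have "step_op d n (CR d ?m) u = (CRel d ?m (u - 1) ! ?j, Suc ?j)"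
    using step_op_inc[OF x _ CRel_step(3)[OF ul] c1 c2] y st by simp
  then show ?thesis using CRel_step(2)[OF ul] by simp
qed

definition posn :: "nat \<Rightarrow> nat \<Rightarrow> nat \<times> nat \<Rightarrow> nat" where
  "posn d m p = (d - snd p) * m + (fst p - snd p) + 1"

lemma posn_range:
  assumes "admissible d n p"
  shows "posn d (n - d) p \<in> {1..d * (n - d)}"
proof -
  obtain s h where p: "p = (s, h)" by (cases p)
  have h: "1 \<le> h" "h \<le> d" "h \<le> s" "s < n - d + h" using assms p by (auto simp: admissible_def)
  have "(d - h) * (n - d) + (s - h) + 1 \<le> (d - h) * (n - d) + (n - d)" using h by simp
  also have "\<dots> = Suc (d - h) * (n - d)" by simp
  also have "\<dots> \<le> d * (n - d)" using h by (intro mult_le_mono1) simp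
  finally show ?thesis using p by (simp add: posn_def)
qed

lemma step_op_CR_posn:
  assumes "d < n" "admissible d n p"
  shows "step_op d n (CR d (n - d)) (posn d (n - d) p) = p"
proof -
  obtain s h where p: "p = (s, h)" by (cases p)
  let ?m = "n - d"
  have h: "1 \<le> h" "h \<le> d" "h \<le> s" "s < ?m + h" using assms p by (auto simp: admissible_def)
  have r: "posn d ?m p \<in> {1..d * ?m}" using posn_range[OF assms(2)] .
  have u1: "posn d ?m p - 1 = (d - h) * ?m + (s - h)" using p by (simp add: posn_def)
  have sl: "s - h < ?m" using h by simp
  have dv: "(posn d ?m p - 1) div ?m = d - h" unfolding u1 using sl by (simp add: div_mult_self3)
  have md: "(posn d ?m p - 1) mod ?m = s - h" unfolding u1 using sl by simp
  have "d - Suc (d - h) = h - 1" using h by simp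
  then show ?thesis using step_op_CR[OF assms(1)] r dv md h p by simp
qed

lemma posn_step_op_CR:
  assumes "d < n" "1 \<le> u" "u \<le> d * (n - d)"
  shows "posn d (n - d) (step_op d n (CR d (n - d)) u) = u"
proof -
  let ?m = "n - d"
  let ?q = "(u - 1) div ?m"
  have ul: "u - 1 < d * ?m" using assms by simp
  have q: "?q < d" using ul by (simp add: less_mult_imp_div_less)
  have "d - Suc (d - Suc ?q) = ?q" using q by simp
  then have "posn d ?m (step_op d n (CR d ?m) u) = ?q * ?m + (u - 1) mod ?m + 1"
    using step_op_CR[OF assms] by (simp add: posn_def)
  also have "\<dots> = u" using assms(2) div_mult_mod_eq[of "u - 1" ?m] by linarith
  finally show ?thesis .
qed

lemma posn_lt:
  assumes "admissible d n (s, h)" "admissible d n (s', h')" "h' < h"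
  shows "posn d (n - d) (s, h) < posn d (n - d) (s', h')"
proof -
  have h: "1 \<le> h" "h \<le> d" "h \<le> s" "s < n - d + h" using assms(1) by (auto simp: admissible_def)
  have "(d - h) * (n - d) + (s - h) + 1 \<le> (d - h) * (n - d) + (n - d)" using h by simp
  also have "\<dots> = Suc (d - h) * (n - d)" by simp
  also have "\<dots> \<le> (d - h') * (n - d)" using h assms(3) by (intro mult_le_mono1) simp
  finally show ?thesis by (simp add: posn_def)
qed

lemma lex_lessI:
  assumes "length x = length y" "i < length x" "\<And>l. l < i \<Longrightarrow> x ! l = y ! l" "x ! i < y ! i"
  shows "lex_less x y"
proof -
  have "take i x = take i y"
    by (rule nth_equalityI) (use assms in auto)
  then show ?thesis unfolding lex_less_def lexord_take_index_conv using assms by auto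
qed

lemma lex_asym: "lex_less x y \<Longrightarrow> \<not> lex_less y x"
proof -
  have "asym {(a, b). a < (b::nat)}" by (auto intro: asymI)
  then show "lex_less x y \<Longrightarrow> \<not> lex_less y x" unfolding lex_less_def using lexord_asymmetric by blast
qed

lemma CR_lower:
  assumes "d < n" "k < d * (n - d)" "covers d n x (CRel d (n - d) (Suc k))" "x \<noteq> CRel d (n - d) k"
  shows "lex_less (CRel d (n - d) k) x"
proof -
  let ?m = "n - d"
  let ?y = "CRel d ?m (Suc k)"
  let ?z = "CRel d ?m k"
  define j where "j = d - Suc (k div ?m)"
  obtain j' where j': "j' < d" "?y = inc x j'" using covers_char[OF assms(3)] by blast
  have xI: "x \<in> Idn d n" using assms(3) by (simp add: covers_def)
  have lx: "length x = d" using Idn_len[OF xI] .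
  have jd: "j < d" using CRel_step(3)[OF assms(2)] unfolding j_def .
  have yz: "?y = inc ?z j" using CRel_step(1)[OF assms(2)] unfolding j_def .
  have xy: "x ! i = ?y ! i" if "i < d" "i \<noteq> j'" for i using j' that lx by (simp add: inc_nth)
  have xy': "Suc (x ! j') = ?y ! j'" using j' lx by (simp add: inc_nth)
  have zy: "?z ! i = ?y ! i" if "i < d" "i \<noteq> j" for i using yz that jd by (simp add: inc_nth)
  have zy': "Suc (?z ! j) = ?y ! j" using yz jd by (simp add: inc_nth)
  have "j' \<noteq> j"
  proof
    assume e: "j' = j"
    have "x = ?z"
    proof (rule nth_equalityI)
      show "length x = length ?z" using lx by simp
      fix i assume "i < length x"
      then show "x ! i = ?z ! i" using xy zy xy' zy' e lx by (cases "i = j") auto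
    qed
    then show False using assms(4) by simp
  qed
  moreover have "\<not> j' < j"
  proof
    assume "j' < j"
    then have "?y ! j' = Suc j'" using CRel_step(4)[OF assms(2)] unfolding j_def by blast
    then have "x ! j' = j'" using xy' by simp
    then show False using Idn_lo[OF xI j'(1)] by simp
  qed
  ultimately have jj: "j < j'" by simp
  show ?thesis
  proof (rule lex_lessI[of _ _ j])
    show "length ?z = length x" using lx by simp
    show "j < length ?z" using jd by simp
    fix l assume "l < j"
    then show "?z ! l = x ! l" using zy xy jj jd by simp
  next
    show "?z ! j < x ! j" using zy' xy[of j] jj jd by simp
  qed
qed

lemma concat_lex:
  assumes "length P = length Q" "k0 < length P" "take k0 P = take k0 Q"
    "lex_less (P ! k0) (Q ! k0)" "length (Q ! k0) \<le> length (P ! k0)"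
  shows "lex_less (concat P) (concat Q)"
proof -
  have P: "P = take k0 P @ P ! k0 # drop (Suc k0) P" using assms(2) by (simp add: id_take_nth_drop)
  have Q: "Q = take k0 Q @ Q ! k0 # drop (Suc k0) Q" using assms(1,2) by (simp add: id_take_nth_drop)
  have "(P ! k0 @ concat (drop (Suc k0) P), Q ! k0 @ concat (drop (Suc k0) Q)) \<in> lexord {(a, b). a < b}"
    using assms(4,5) lexord_sufI unfolding lex_less_def by blast
  then have "(concat (take k0 P) @ P ! k0 @ concat (drop (Suc k0) P),
              concat (take k0 Q) @ Q ! k0 @ concat (drop (Suc k0) Q)) \<in> lexord {(a, b). a < b}"
    using assms(3) lexord_append_leftI by metis
  then show ?thesis unfolding lex_less_def
    by (metis P Q concat.simps(2) concat_append)
qed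


lemma CR_min:
  assumes "d < n" "maxchain d n c" "c \<noteq> CR d (n - d)"
  shows "lex_less (chain_word (CR d (n - d))) (chain_word c)"
proof -
  let ?m = "n - d"
  let ?r = "d * ?m"
  let ?C = "CR d ?m"
  have dn: "d \<le> n" using assms by simp
  have lc: "length c = Suc ?r" using chain_len[OF assms(2) dn] .
  define A where "A = rev ?C"
  define B where "B = rev c"
  have lA: "length A = Suc ?r" and lB: "length B = Suc ?r" unfolding A_def B_def using lc by auto
  have AB: "A \<noteq> B" using assms(3) unfolding A_def B_def by simp
  have ex: "\<exists>i. i < Suc ?r \<and> A ! i \<noteq> B ! i"
  proof (rule ccontr)
    assume "\<not> ?thesis"
    then have "A = B" using lA lB by (auto intro: nth_equalityI)
    then show False using AB by simp
  qed
  define k0 where "k0 = (LEAST i. i < Suc ?r \<and> A ! i \<noteq> B ! i)"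
  have k0: "k0 < Suc ?r" "A ! k0 \<noteq> B ! k0" using LeastI_ex[OF ex] unfolding k0_def by auto
  have before: "A ! i = B ! i" if "i < k0" for i
    using not_less_Least[of i "\<lambda>i. i < Suc ?r \<and> A ! i \<noteq> B ! i"] that k0(1) unfolding k0_def by auto
  have Ai: "A ! i = CRel d ?m (?r - i)" if "i < Suc ?r" for i
    using that unfolding A_def by (simp add: rev_nth CR_nth)
  have Bi: "B ! i = c ! (?r - i)" if "i < Suc ?r" for i
    using that lc unfolding B_def by (simp add: rev_nth)
  have "A ! 0 = B ! 0"
  proof -
    have "A ! 0 = top d n" using Ai[of 0] CRel_top[of d ?m] assms(1) by simp
    moreover have "B ! 0 = top d n" using Bi[of 0] chain_last[OF assms(2)] lc by simp
    ultimately show ?thesis by simp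
  qed
  then have k0p: "k0 \<noteq> 0" using k0(2) by (metis)
  define k where "k = ?r - k0"
  have kr: "k < ?r" using k0p k0 unfolding k_def by simp
  have e1: "CRel d ?m (Suc k) = c ! Suc k"
  proof -
    have "A ! (k0 - 1) = B ! (k0 - 1)" using before k0p by simp
    moreover have "?r - (k0 - 1) = Suc k" using k0p k0 unfolding k_def by simp
    ultimately show ?thesis using Ai[of "k0 - 1"] Bi[of "k0 - 1"] k0 by simp
  qed
  have e2: "A ! k0 = CRel d ?m k" "B ! k0 = c ! k" using Ai Bi k0 unfolding k_def by auto
  have cov: "covers d n (c ! k) (CRel d ?m (Suc k))" using chain_covers[OF assms(2), of k] lc kr e1 by simp
  have lt: "lex_less (CRel d ?m k) (c ! k)"
    using CR_lower[OF assms(1) kr cov] k0(2) e2 by metis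
  have ck: "c ! k \<in> Idn d n" using chain_Idn[OF assms(2) dn, of k] lc kr by simp
  have tk: "take k0 A = take k0 B" by (rule nth_equalityI) (use before lA lB in auto)
  have "lex_less (concat A) (concat B)"
    using concat_lex[of A B k0] lA lB k0(1) tk lt e2 Idn_len[OF ck] by simp
  then show ?thesis unfolding chain_word_def A_def B_def .
qed

lemma C_right_eq:
  assumes "d < n"
  shows "C_right d n = CR d (n - d)"
  unfolding C_right_def
proof (rule the_equality)
  show "maxchain d n (CR d (n - d)) \<and>
    (\<forall>c'. maxchain d n c' \<and> c' \<noteq> CR d (n - d) \<longrightarrow> lex_less (chain_word (CR d (n - d))) (chain_word c'))"
    using CR_maxchain[OF assms] CR_min[OF assms] by blast
next
  fix c assume c: "maxchain d n c \<and> (\<forall>c'. maxchain d n c' \<and> c' \<noteq> c \<longrightarrow> lex_less (chain_word c) (chain_word c'))"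
  show "c = CR d (n - d)"
  proof (rule ccontr)
    assume ne: "c \<noteq> CR d (n - d)"
    then have "lex_less (chain_word c) (chain_word (CR d (n - d)))" using c CR_maxchain[OF assms] by metis
    moreover have "lex_less (chain_word (CR d (n - d))) (chain_word c)" using CR_min[OF assms] c ne by blast
    ultimately show False using lex_asym by blast
  qed
qed

lemma chain_op:
  assumes "maxchain d n c" "d < n" "1 \<le> t" "t < length c"
  shows "\<exists>a<d. c ! t = inc (c ! (t - 1)) a \<and> step_op d n c t = (c ! (t - 1) ! a, Suc a)
     \<and> admissible d n (c ! (t - 1) ! a, Suc a)"
proof -
  have dn: "d \<le> n" using assms by simp
  obtain a where a: "a < d" "c ! Suc (t - 1) = inc (c ! (t - 1)) a"
    using chain_step[OF assms(1), of "t - 1"] assms by auto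
  have ct: "c ! t = inc (c ! (t - 1)) a" using a assms(3) by simp
  have x: "c ! (t - 1) \<in> Idn d n" using chain_Idn[OF assms(1) dn, of "t - 1"] assms by simp
  have y: "inc (c ! (t - 1)) a \<in> Idn d n" using chain_Idn[OF assms(1) dn, of t] assms ct by simp
  show ?thesis using ct step_op_inc[OF x y a(1) refl ct] adm_inc[OF x y a(1)] a(1) by blast
qed

lemma sigma_eq:
  assumes "maxchain d n c" "d < n" "t \<in> {1..d * (n - d)}"
  shows "sigma d n c t = posn d (n - d) (step_op d n c t) \<and> admissible d n (step_op d n c t)"
proof -
  have dn: "d \<le> n" using assms by simp
  have lc: "length c = Suc (d * (n - d))" using chain_len[OF assms(1) dn] .
  obtain a where a: "a < d" "step_op d n c t = (c ! (t - 1) ! a, Suc a)" "admissible d n (c ! (t - 1) ! a, Suc a)"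
    using chain_op[OF assms(1,2), of t] assms(3) lc by auto
  let ?p = "step_op d n c t"
  have adm: "admissible d n ?p" using a by simp
  have "(THE u. u \<in> {1..d * (n - d)} \<and> step_op d n (C_right d n) u = ?p) = posn d (n - d) ?p"
  proof (rule the_equality)
    show "posn d (n - d) ?p \<in> {1..d * (n - d)} \<and> step_op d n (C_right d n) (posn d (n - d) ?p) = ?p"
      using posn_range[OF adm] step_op_CR_posn[OF assms(2) adm] C_right_eq[OF assms(2)] by simp
  next
    fix u assume u: "u \<in> {1..d * (n - d)} \<and> step_op d n (C_right d n) u = ?p"
    then have "posn d (n - d) (step_op d n (CR d (n - d)) u) = u"
      using posn_step_op_CR[OF assms(2)] by auto
    then show "u = posn d (n - d) ?p" using u C_right_eq[OF assms(2)] by simp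
  qed
  then show ?thesis using assms(3) adm unfolding sigma_def by simp
qed



lemma inc_comm:
  assumes "a \<noteq> b" "a < length x" "b < length x"
  shows "inc (inc x a) b = inc (inc x b) a"
  by (rule nth_equalityI) (use assms in \<open>auto simp: inc_nth\<close>)

lemma list_eq3:
  assumes "length z = d" "length w = d" "z ! a = w ! a" "z ! b = w ! b"
    "\<And>i. i < d \<Longrightarrow> i \<noteq> a \<Longrightarrow> i \<noteq> b \<Longrightarrow> z ! i = w ! i"
  shows "z = w"
proof (rule nth_equalityI)
  show "length z = length w" using assms by simp
  fix i assume i: "i < length z"
  show "z ! i = w ! i"
  proof (cases "i = a")
    case True then show ?thesis using assms(3) by simp
  next
    case False
    show ?thesis
    proof (cases "i = b")
      case True then show ?thesis using assms(4) by simp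
    next
      case False
      then show ?thesis using assms(1,5) i \<open>i \<noteq> a\<close> by simp
    qed
  qed
qed

lemma interval_sub:
  assumes x: "x \<in> Idn d n" and a: "a < d" and b: "b < d"
  shows "interval d n x (inc (inc x a) b) \<subseteq> {x, inc x a, inc x b, inc (inc x a) b}"
proof
  fix z assume z: "z \<in> interval d n x (inc (inc x a) b)"
  let ?y = "inc (inc x a) b"
  have lx: "length x = d" using Idn_len[OF x] .
  have zI: "z \<in> Idn d n" and xz: "ile x z" and zy: "ile z ?y" using z by (auto simp: interval_def)
  have lz: "length z = d" using Idn_len[OF zI] .
  have al: "a < length x" "b < length x" "a < length (inc x a)" "b < length (inc x a)" using a b lx by auto
  have zb1: "x ! i \<le> z ! i" if "i < d" for i using xz that lx by (simp add: ile_def)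
  have zb2: "z ! i \<le> ?y ! i" if "i < d" for i using zy that lz by (simp add: ile_def)
  have other: "z ! i = x ! i" if "i < d" "i \<noteq> a" "i \<noteq> b" for i
  proof -
    have "?y ! i = x ! i" using that al by (simp add: inc_nth)
    then show ?thesis using zb1[OF that(1)] zb2[OF that(1)] by simp
  qed
  have ya: "?y ! a = (if a = b then Suc (Suc (x ! a)) else Suc (x ! a))" using al by (simp add: inc_nth)
  have yb: "?y ! b = (if a = b then Suc (Suc (x ! b)) else Suc (x ! b))" using al by (simp add: inc_nth)
  have oth_x: "x ! i = x ! i" for i by simp
  have oa: "inc x a ! i = x ! i" if "i \<noteq> a" for i using that al by (simp add: inc_nth)
  have ob: "inc x b ! i = x ! i" if "i \<noteq> b" for i using that al by (simp add: inc_nth)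
  have oy: "?y ! i = x ! i" if "i \<noteq> a" "i \<noteq> b" for i using that al by (simp add: inc_nth)
  have incaa: "inc x a ! a = Suc (x ! a)" using al by (simp add: inc_nth)
  have incbb: "inc x b ! b = Suc (x ! b)" using al by (simp add: inc_nth)
  show "z \<in> {x, inc x a, inc x b, ?y}"
  proof (cases "a = b")
    case True
    have r: "x ! a \<le> z ! a" "z ! a \<le> Suc (Suc (x ! a))" using zb1[OF a] zb2[OF a] ya True by auto
    consider "z ! a = x ! a" | "z ! a = Suc (x ! a)" | "z ! a = Suc (Suc (x ! a))" using r by linarith
    then show ?thesis
    proof cases
      case 1
      have "z = x" by (rule list_eq3[OF lz lx, where a=a and b=b]) (use 1 True other in auto)
      then show ?thesis by simp
    next
      case 2
      have "z = inc x a" by (rule list_eq3[OF lz _, where a=a and b=b]) (use 2 True other lx incaa oa in auto)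
      then show ?thesis by simp
    next
      case 3
      have "z = ?y" by (rule list_eq3[OF lz _, where a=a and b=b]) (use 3 True other lx ya oy in auto)
      then show ?thesis by simp
    qed
  next
    case False
    have ra: "x ! a \<le> z ! a" "z ! a \<le> Suc (x ! a)" using zb1[OF a] zb2[OF a] ya False by auto
    have rb: "x ! b \<le> z ! b" "z ! b \<le> Suc (x ! b)" using zb1[OF b] zb2[OF b] yb False by auto
    consider "z ! a = x ! a" "z ! b = x ! b" | "z ! a = Suc (x ! a)" "z ! b = x ! b"
      | "z ! a = x ! a" "z ! b = Suc (x ! b)" | "z ! a = Suc (x ! a)" "z ! b = Suc (x ! b)"
      using ra rb by linarith
    then show ?thesis
    proof cases
      case 1
      have "z = x" by (rule list_eq3[OF lz lx, where a=a and b=b]) (use 1 other in auto)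
      then show ?thesis by simp
    next
      case 2
      have "z = inc x a" by (rule list_eq3[OF lz _, where a=a and b=b]) (use 2 False other lx incaa oa in auto)
      then show ?thesis by simp
    next
      case 3
      have "z = inc x b" by (rule list_eq3[OF lz _, where a=a and b=b]) (use 3 False other lx incbb ob in auto)
      then show ?thesis by simp
    next
      case 4
      have "z = ?y" by (rule list_eq3[OF lz _, where a=a and b=b]) (use 4 False other lx ya yb oy in auto)
      then show ?thesis by simp
    qed
  qed
qed

lemma card3: "card {p, q, r} \<le> 3"
  by (simp add: card_insert_if)

lemma diamond:
  assumes x: "x \<in> Idn d n" and a: "a < d" and b: "b < d"
    and y: "inc x a \<in> Idn d n" "inc (inc x a) b \<in> Idn d n"
    and c4: "card (interval d n x (inc (inc x a) b)) = 4"
  shows "a \<noteq> b \<and> inc x b \<in> Idn d n \<and>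
    interval d n x (inc (inc x a) b) - {x, inc x a, inc (inc x a) b} = {inc x b}"
proof -
  let ?I = "interval d n x (inc (inc x a) b)"
  let ?T = "{x, inc x a, inc (inc x a) b}"
  have sub: "?I \<subseteq> {x, inc x a, inc x b, inc (inc x a) b}" using interval_sub[OF x a b] .
  have ab: "a \<noteq> b"
  proof
    assume "a = b"
    then have "?I \<subseteq> ?T" using sub by auto
    then have "card ?I \<le> card ?T" by (intro card_mono) auto
    then show False using c4 card3[of x "inc x a" "inc (inc x a) b"] by simp
  qed
  have ne: "?I - ?T \<noteq> {}"
  proof
    assume "?I - ?T = {}"
    then have "?I \<subseteq> ?T" by auto
    then have "card ?I \<le> card ?T" by (intro card_mono) auto
    then show False using c4 card3[of x "inc x a" "inc (inc x a) b"] by simp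
  qed
  have "?I - ?T \<subseteq> {inc x b}" using sub by auto
  then have eq: "?I - ?T = {inc x b}" using ne by auto
  then have "inc x b \<in> ?I" by auto
  then have "inc x b \<in> Idn d n" by (simp add: interval_def)
  then show ?thesis using ab eq by simp
qed

lemma step_op_update:
  assumes "u \<noteq> t" "u - 1 \<noteq> t"
  shows "step_op d n (c[t := v]) u = step_op d n c u"
  using assms by (simp add: step_op_def)

lemma sigma_swap:
  assumes "1 \<le> t" "Suc t \<le> d * (n - d)"
    "step_op d n c' t = step_op d n c (Suc t)" "step_op d n c' (Suc t) = step_op d n c t"
    "\<And>u. u \<noteq> t \<Longrightarrow> u \<noteq> Suc t \<Longrightarrow> step_op d n c' u = step_op d n c u"
  shows "sigma d n c' = sigma d n c \<circ> simple_tr t"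
proof
  fix u
  show "sigma d n c' u = (sigma d n c \<circ> simple_tr t) u"
  proof (cases "u = t")
    case True then show ?thesis using assms(1-3) by (simp add: sigma_def simple_tr_def)
  next
    case False
    show ?thesis
    proof (cases "u = Suc t")
      case True then show ?thesis using assms(1,2,4) by (simp add: sigma_def simple_tr_def)
    next
      case False
      have "simple_tr t u = u" using False \<open>u \<noteq> t\<close> by (simp add: simple_tr_def)
      then show ?thesis using assms(5)[OF \<open>u \<noteq> t\<close> False] by (simp add: sigma_def)
    qed
  qed
qed

lemma ops_distinct:
  assumes "maxchain d n c" "d < n" "1 \<le> u" "u < v" "v < length c"
  shows "step_op d n c u \<noteq> step_op d n c v"
proof
  assume eq: "step_op d n c u = step_op d n c v"
  have dn: "d \<le> n" using assms by simp
  obtain a where a: "a < d" "c ! u = inc (c ! (u - 1)) a" "step_op d n c u = (c ! (u - 1) ! a, Suc a)"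
    using chain_op[OF assms(1,2,3)] assms by auto
  have v1: "1 \<le> v" using assms by simp
  obtain b where b: "b < d" "step_op d n c v = (c ! (v - 1) ! b, Suc b)"
    using chain_op[OF assms(1,2) v1 assms(5)] by auto
  have ab: "a = b" and vv: "c ! (u - 1) ! a = c ! (v - 1) ! a" using eq a b by auto
  have "ile (c ! u) (c ! (v - 1))" using chain_ile[OF assms(1) dn, of u "v - 1"] assms by simp
  moreover have "length (c ! u) = d" using chain_Idn[OF assms(1) dn, of u] assms Idn_len by simp
  ultimately have "c ! u ! a \<le> c ! (v - 1) ! a" using a(1) by (simp add: ile_def)
  moreover have "c ! (u - 1) \<in> Idn d n" using chain_Idn[OF assms(1) dn, of "u - 1"] assms by simp
  then have "length (c ! (u - 1)) = d" by (rule Idn_len)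
  then have "c ! u ! a = Suc (c ! (u - 1) ! a)" using a by (simp add: inc_nth)
  ultimately show False using vv by simp
qed

lemma sigma_plike:
  assumes "maxchain d n c" "d < n"
  shows "plike (d * (n - d)) (sigma d n c)"
proof -
  let ?r = "d * (n - d)"
  have dn: "d \<le> n" using assms by simp
  have lc: "length c = Suc ?r" using chain_len[OF assms(1) dn] .
  have into: "sigma d n c ` {1..?r} \<subseteq> {1..?r}"
  proof (rule image_subsetI)
    fix u assume u: "u \<in> {1..?r}"
    have "sigma d n c u = posn d (n - d) (step_op d n c u)" "admissible d n (step_op d n c u)"
      using sigma_eq[OF assms u] by auto
    then show "sigma d n c u \<in> {1..?r}" using posn_range by metis
  qed
  have inj: "inj_on (sigma d n c) {1..?r}"
  proof (rule inj_onI)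
    fix u v assume u: "u \<in> {1..?r}" and v: "v \<in> {1..?r}" and e: "sigma d n c u = sigma d n c v"
    have eu: "sigma d n c u = posn d (n - d) (step_op d n c u)" "admissible d n (step_op d n c u)"
      using sigma_eq[OF assms u] by auto
    have ev: "sigma d n c v = posn d (n - d) (step_op d n c v)" "admissible d n (step_op d n c v)"
      using sigma_eq[OF assms v] by auto
    have "step_op d n c u = step_op d n c v"
      using step_op_CR_posn[OF assms(2) eu(2)] step_op_CR_posn[OF assms(2) ev(2)] e eu(1) ev(1) by metis
    then show "u = v"
      using ops_distinct[OF assms, of u v] ops_distinct[OF assms, of v u] u v lc
      by (cases "u < v"; cases "v < u") auto
  qed
  have out: "sigma d n c x = x" if "x \<notin> {1..?r}" for x
    unfolding sigma_def by (rule if_not_P[OF that])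
  show ?thesis using into inj out by (simp add: plike_def)
qed


theorem proposition2p26:
  fixes d n r t :: nat and c :: "nat list list"
  assumes "1 \<le> d" and "d < n" and "r = d * (n - d)"
    and "maxchain d n c"
    and "1 \<le> t" and "t \<le> r - 1"
  shows "(\<forall>c'. F_op d n t c = Some c' \<longrightarrow>
            sigma d n c' = sigma d n c \<circ> simple_tr t \<and>
            coxeter_length r (sigma d n c') = coxeter_length r (sigma d n c) + 1 \<and>
            weak_less_R r (sigma d n c) (sigma d n c'))
       \<and> (\<forall>c'. E_op d n t c = Some c' \<longrightarrow>
            sigma d n c' = sigma d n c \<circ> simple_tr t \<and>
            coxeter_length r (sigma d n c') + 1 = coxeter_length r (sigma d n c) \<and>
            weak_less_R r (sigma d n c') (sigma d n c))"
proof -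
  have dn: "d \<le> n" using assms by simp
  have lc: "length c = Suc r" using chain_len[OF assms(4) dn] assms(3) by simp
  have tr: "Suc t \<le> r" using assms(5,6) by simp
  define x where "x = c ! (t - 1)"
  obtain a where a: "a < d" "c ! t = inc x a" "step_op d n c t = (x ! a, Suc a)"
    "admissible d n (x ! a, Suc a)"
    using chain_op[OF assms(4,2,5)] lc tr unfolding x_def by auto
  have st1: "1 \<le> Suc t" by simp
  obtain b where b: "b < d" "c ! Suc t = inc (c ! t) b" "step_op d n c (Suc t) = (c ! t ! b, Suc b)"
    "admissible d n (c ! t ! b, Suc b)"
    using chain_op[OF assms(4,2) st1] lc tr by auto
  have xI: "x \<in> Idn d n" using chain_Idn[OF assms(4) dn, of "t - 1"] lc tr unfolding x_def by simp
  have caI: "inc x a \<in> Idn d n" using chain_Idn[OF assms(4) dn, of t] lc tr a(2) by simp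
  have cabI: "inc (inc x a) b \<in> Idn d n" using chain_Idn[OF assms(4) dn, of "Suc t"] lc tr a(2) b(2) by simp
  have lx: "length x = d" using Idn_len[OF xI] .
  have ivl: "interval d n (c ! (t - 1)) (c ! (t + 1)) = interval d n x (inc (inc x a) b)"
    using a(2) b(2) unfolding x_def by simp
  have plk: "plike r (sigma d n c)" using sigma_plike[OF assms(4,2)] assms(3) by simp
  have sig_t: "sigma d n c t = posn d (n - d) (x ! a, Suc a)"
    using sigma_eq[OF assms(4,2), of t] assms(3,5) tr a(3) by simp
  have sig_st: "sigma d n c (Suc t) = posn d (n - d) (x ! b, Suc b)" if "a \<noteq> b"
  proof -
    have "c ! t ! b = x ! b" using a(2) that lx a(1) b(1) by (simp add: inc_nth)
    then show ?thesis using sigma_eq[OF assms(4,2), of "Suc t"] assms(3) tr b(3) by simp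
  qed
  have admb: "admissible d n (x ! b, Suc b)" if "a \<noteq> b"
  proof -
    have "c ! t ! b = x ! b" using a(2) that lx a(1) b(1) by (simp add: inc_nth)
    then show ?thesis using b(4) by simp
  qed
  have key: "a \<noteq> b \<and> other_elt d n c t = inc x b \<and>
      sigma d n (c[t := inc x b]) = sigma d n c \<circ> simple_tr t"
    if c4: "card (interval d n (c ! (t - 1)) (c ! (t + 1))) = 4"
  proof -
    have D: "a \<noteq> b \<and> inc x b \<in> Idn d n \<and>
        interval d n x (inc (inc x a) b) - {x, inc x a, inc (inc x a) b} = {inc x b}"
      using diamond[OF xI a(1) b(1) caI cabI] c4 ivl by simp
    then have ab: "a \<noteq> b" and obI: "inc x b \<in> Idn d n" by auto
    have oe: "other_elt d n c t = inc x b"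
      unfolding other_elt_def using D a(2) b(2) unfolding x_def by simp
    let ?c' = "c[t := inc x b]"
    have tl: "t < length c" "Suc t < length c" using lc tr by auto
    have c'1: "?c' ! (t - 1) = x" using assms(5) unfolding x_def by simp
    have c'2: "?c' ! t = inc x b" using tl by simp
    have c'3: "?c' ! Suc t = inc (inc x b) a"
      using b(2) a(2) inc_comm[OF ab] lx a(1) b(1) by simp
    have cab': "inc (inc x b) a \<in> Idn d n" using cabI inc_comm[OF ab] lx a(1) b(1) by simp
    have s1: "step_op d n ?c' t = (x ! b, Suc b)"
      by (rule step_op_inc[OF xI obI b(1) c'1 c'2])
    have s2: "step_op d n ?c' (Suc t) = (inc x b ! a, Suc a)"
      by (rule step_op_inc[OF obI cab' a(1)]) (use c'2 c'3 in simp_all)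
    have xba: "inc x b ! a = x ! a" using ab lx a(1) b(1) by (simp add: inc_nth)
    have ctb: "c ! t ! b = x ! b" using a(2) ab lx a(1) b(1) by (simp add: inc_nth)
    have "sigma d n ?c' = sigma d n c \<circ> simple_tr t"
    proof (rule sigma_swap)
      show "1 \<le> t" by (rule assms(5))
      show "Suc t \<le> d * (n - d)" using tr assms(3) by simp
      show "step_op d n ?c' t = step_op d n c (Suc t)" using s1 b(3) ctb by simp
      show "step_op d n ?c' (Suc t) = step_op d n c t" using s2 a(3) xba by simp
      fix u assume "u \<noteq> t" "u \<noteq> Suc t"
      then show "step_op d n ?c' u = step_op d n c u"
        by (intro step_op_update) auto
    qed
    then show ?thesis using ab oe by simp
  qed
  have F: "sigma d n c' = sigma d n c \<circ> simple_tr t \<and>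
            coxeter_length r (sigma d n c') = coxeter_length r (sigma d n c) + 1 \<and>
            weak_less_R r (sigma d n c) (sigma d n c')" if "F_op d n t c = Some c'" for c'
  proof -
    have rp: "right_peak d n c t" and c': "c' = c[t := other_elt d n c t]"
      using that unfolding F_op_def by (auto split: if_splits)
    have c4: "card (interval d n (c ! (t - 1)) (c ! (t + 1))) = 4" and lx1: "lex_less (c ! t) (other_elt d n c t)"
      using rp unfolding right_peak_def by auto
    have K: "a \<noteq> b" "other_elt d n c t = inc x b" "sigma d n (c[t := inc x b]) = sigma d n c \<circ> simple_tr t"
      using key[OF c4] by auto
    have ba: "b < a"
    proof (rule ccontr)
      assume "\<not> b < a"
      then have ab: "a < b" using K(1) by simp
      have "lex_less (inc x b) (inc x a)"
      proof (rule lex_lessI[of _ _ a])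
        show "length (inc x b) = length (inc x a)" by simp
        show "a < length (inc x b)" using a(1) lx by simp
        fix l assume "l < a" then show "inc x b ! l = inc x a ! l" using ab lx a(1) b(1) by (simp add: inc_nth)
      next
        show "inc x b ! a < inc x a ! a" using ab lx a(1) b(1) by (simp add: inc_nth)
      qed
      then show False using lx1 K(2) a(2) lex_asym by simp
    qed
    have lt: "sigma d n c t < sigma d n c (Suc t)"
      using sig_t sig_st[OF K(1)] posn_lt[OF a(4) admb[OF K(1)]] ba by simp
    have sc: "sigma d n c' = sigma d n c \<circ> simple_tr t" using c' K by simp
    show ?thesis using coxeter_up[OF plk assms(5) tr lt] sc by simp
  qed
  have E: "sigma d n c' = sigma d n c \<circ> simple_tr t \<and>
            coxeter_length r (sigma d n c') + 1 = coxeter_length r (sigma d n c) \<and>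
            weak_less_R r (sigma d n c') (sigma d n c)" if "E_op d n t c = Some c'" for c'
  proof -
    have lp: "left_peak d n c t" and c': "c' = c[t := other_elt d n c t]"
      using that unfolding E_op_def by (auto split: if_splits)
    have c4: "card (interval d n (c ! (t - 1)) (c ! (t + 1))) = 4" and lx1: "lex_less (other_elt d n c t) (c ! t)"
      using lp unfolding left_peak_def by auto
    have K: "a \<noteq> b" "other_elt d n c t = inc x b" "sigma d n (c[t := inc x b]) = sigma d n c \<circ> simple_tr t"
      using key[OF c4] by auto
    have ab: "a < b"
    proof (rule ccontr)
      assume "\<not> a < b"
      then have ba: "b < a" using K(1) by simp
      have "lex_less (inc x a) (inc x b)"
      proof (rule lex_lessI[of _ _ b])
        show "length (inc x a) = length (inc x b)" by simp
        show "b < length (inc x a)" using b(1) lx by simp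
        fix l assume "l < b" then show "inc x a ! l = inc x b ! l" using ba lx a(1) b(1) by (simp add: inc_nth)
      next
        show "inc x a ! b < inc x b ! b" using ba lx a(1) b(1) by (simp add: inc_nth)
      qed
      then show False using lx1 K(2) a(2) lex_asym by simp
    qed
    have gt: "sigma d n c (Suc t) < sigma d n c t"
      using sig_t sig_st[OF K(1)] posn_lt[OF admb[OF K(1)] a(4)] ab by simp
    have sc: "sigma d n c' = sigma d n c \<circ> simple_tr t" using c' K by simp
    let ?w = "sigma d n c \<circ> simple_tr t"
    have pw: "plike r ?w" using plike_comp[OF plk assms(5) tr] .
    have lt': "?w t < ?w (Suc t)" using gt by (simp add: simple_tr_def)
    have bk: "?w \<circ> simple_tr t = sigma d n c" by (rule ext) simp
    have C2: "coxeter_length r (sigma d n c) = coxeter_length r ?w + 1 \<and> weak_less_R r ?w (sigma d n c)"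
      using coxeter_up[OF pw assms(5) tr lt'] unfolding bk .
    show ?thesis unfolding sc using C2 by auto
  qed
  show ?thesis using F E by blast
qed

end
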